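(* Let $\mathbb{F}$ be an infinite field with $\operatorname{char}(\mathbb{F})\neq 2$, let $G$ be a group with a group involution $\ast$, extended $\mathbb{F}$-linearly to $\mathbb{F}G$. Suppose that $\mathbb{F}G$ is normal with respect to $\ast$. Then $G^+\subseteq\zeta(G)$. In particular, $gg^\ast=g^\ast g\in\zeta(G)$ for all $g\in G$.
   Context: A group involution on $G$ is a map $\ast:G\to G$ with $(gh)^\ast=h^\ast g^\ast$ and $(g^\ast)^\ast=g$ for all $g,h\in G$; it is extended $\mathbb{F}$-linearly to an algebra involution of $\mathbb{F}G$. The algebra $\mathbb{F}G$ is normal (with respect to $\ast$) if $\alpha\alpha^\ast=\alpha^\ast\alpha$ for all $\alpha\in\mathbb{F}G$. $G^+=\{g\in G: g^\ast=g\}$, and $\zeta(G)$ is the center of $G$. *)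

theory Defs
  imports "HOL-Algebra.Group"
begin

definition group_center :: "('a, 'b) monoid_scheme \<Rightarrow> 'a set" where
  "group_center G = {z \<in> carrier G. \<forall>g \<in> carrier G. z \<otimes>\<^bsub>G\<^esub> g = g \<otimes>\<^bsub>G\<^esub> z}"

definition group_involution :: "('a, 'b) monoid_scheme \<Rightarrow> ('a \<Rightarrow> 'a) \<Rightarrow> bool" where
  "group_involution G s \<longleftrightarrow>
     (\<forall>g \<in> carrier G. s g \<in> carrier G) \<and>
     (\<forall>g \<in> carrier G. s (s g) = g) \<and>
     (\<forall>g \<in> carrier G. \<forall>h \<in> carrier G. s (g \<otimes>\<^bsub>G\<^esub> h) = s h \<otimes>\<^bsub>G\<^esub> s g)"

text \<open>Elements of the group algebra FG: finitely supported coefficient functions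
  on the carrier of G.\<close>
definition group_algebra :: "('a, 'b) monoid_scheme \<Rightarrow> ('a \<Rightarrow> 'f::field) set" where
  "group_algebra G = {\<alpha>. finite {x. \<alpha> x \<noteq> 0} \<and> (\<forall>x. x \<notin> carrier G \<longrightarrow> \<alpha> x = 0)}"

definition ga_mult :: "('a, 'b) monoid_scheme \<Rightarrow> ('a \<Rightarrow> 'f::field) \<Rightarrow> ('a \<Rightarrow> 'f) \<Rightarrow> ('a \<Rightarrow> 'f)" where
  "ga_mult G \<alpha> \<beta> = (\<lambda>x. if x \<in> carrier G
      then (\<Sum>y \<in> {y \<in> carrier G. \<alpha> y \<noteq> 0}. \<alpha> y * \<beta> (inv\<^bsub>G\<^esub> y \<otimes>\<^bsub>G\<^esub> x))
      else 0)"

text \<open>Linear extension of the involution: (\<Sum> a_g g)^* = \<Sum> a_g g^*, so the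
  coefficient of h in \<alpha>^* is \<alpha>(h^*).\<close>
definition ga_star :: "('a, 'b) monoid_scheme \<Rightarrow> ('a \<Rightarrow> 'a) \<Rightarrow> ('a \<Rightarrow> 'f::field) \<Rightarrow> ('a \<Rightarrow> 'f)" where
  "ga_star G s \<alpha> = (\<lambda>h. if h \<in> carrier G then \<alpha> (s h) else 0)"

definition ga_normal :: "('a, 'b) monoid_scheme \<Rightarrow> ('a \<Rightarrow> 'a) \<Rightarrow> 'f::field itself \<Rightarrow> bool" where
  "ga_normal G s TYPE('f) \<longleftrightarrow>
     (\<forall>\<alpha> \<in> (group_algebra G :: ('a \<Rightarrow> 'f) set).
        ga_mult G \<alpha> (ga_star G s \<alpha>) = ga_mult G (ga_star G s \<alpha>) \<alpha>)"

end

theory Submission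
  imports Defs
begin

lemma ga_mult_eq:
  fixes G (structure)
  assumes "finite T" "T \<subseteq> carrier G" "\<And>y. y \<in> carrier G \<Longrightarrow> \<alpha> y \<noteq> 0 \<Longrightarrow> y \<in> T"
    "x \<in> carrier G"
  shows "ga_mult G \<alpha> \<beta> x = (\<Sum>y\<in>T. \<alpha> y * \<beta> (inv y \<otimes> x))"
proof -
  have "(\<Sum>y \<in> {y \<in> carrier G. \<alpha> y \<noteq> 0}. \<alpha> y * \<beta> (inv y \<otimes> x)) = (\<Sum>y\<in>T. \<alpha> y * \<beta> (inv y \<otimes> x))"
    by (rule sum.mono_neutral_left) (use assms in auto)
  then show ?thesis using assms(4) by (simp add: ga_mult_def)
qed

lemma ind_in:
  fixes G (structure)
  assumes "finite A" "A \<subseteq> carrier G"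
  shows "(\<lambda>x. if x \<in> A then (1::'f::field) else 0) \<in> group_algebra G"
  using assms unfolding group_algebra_def
  by (auto intro: finite_subset[of _ A])

lemma normal_at:
  fixes G (structure)
  assumes "ga_normal G s TYPE('f::field)" "finite A" "A \<subseteq> carrier G"
  shows "ga_mult G (\<lambda>x. if x \<in> A then (1::'f) else 0) (ga_star G s (\<lambda>x. if x \<in> A then (1::'f) else 0)) x
       = ga_mult G (ga_star G s (\<lambda>x. if x \<in> A then (1::'f) else 0)) (\<lambda>x. if x \<in> A then (1::'f) else 0) x"
  using assms ind_in[OF assms(2,3), where 'f='f] unfolding ga_normal_def by metis

lemma sing:
  fixes G (structure)
  assumes grp: "group G" and inv: "group_involution G s" and nor: "ga_normal G s TYPE('f::field)"
    and h: "h \<in> carrier G"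
  shows "h \<otimes> s h = s h \<otimes> h"
proof -
  interpret group G by fact
  have sc: "\<And>g. g \<in> carrier G \<Longrightarrow> s g \<in> carrier G" and ss: "\<And>g. g \<in> carrier G \<Longrightarrow> s (s g) = g"
    using inv unfolding group_involution_def by auto
  define x where "x = h \<otimes> s h"
  have x: "x \<in> carrier G" using h sc x_def by auto
  let ?a = "\<lambda>x. if x \<in> {h} then (1::'f) else 0"
  have e: "ga_mult G ?a (ga_star G s ?a) x = ga_mult G (ga_star G s ?a) ?a x"
    by (rule normal_at[OF nor]) (use h in auto)
  have l: "ga_mult G ?a (ga_star G s ?a) x = (\<Sum>y\<in>{h}. ?a y * ga_star G s ?a (inv y \<otimes> x))"
    by (rule ga_mult_eq) (use h x in \<open>auto split: if_splits\<close>)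
  have "inv h \<otimes> x = s h" unfolding x_def using h sc by (simp add: m_assoc[symmetric])
  hence l1: "ga_mult G ?a (ga_star G s ?a) x = 1" using l h sc ss by (simp add: ga_star_def)
  have r: "ga_mult G (ga_star G s ?a) ?a x = (\<Sum>y\<in>{s h}. ga_star G s ?a y * ?a (inv y \<otimes> x))"
    by (rule ga_mult_eq) (use h x sc ss in \<open>auto simp: ga_star_def split: if_splits\<close>)
  hence "inv (s h) \<otimes> x = h" using e l1 h sc ss by (auto simp: ga_star_def split: if_splits)
  thus ?thesis using h sc x_def inv_solve_left' by auto
qed

lemma pair:
  fixes G (structure)
  assumes grp: "group G" and inv: "group_involution G s" and nor: "ga_normal G s TYPE('f::field)"
    and two: "(2::'f) \<noteq> 0"
    and g: "g \<in> carrier G" "s g = g" and h: "h \<in> carrier G" "s h \<noteq> h"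
  shows "h \<otimes> g = g \<otimes> h"
proof -
  interpret group G by fact
  have sc: "\<And>g. g \<in> carrier G \<Longrightarrow> s g \<in> carrier G" and ss: "\<And>g. g \<in> carrier G \<Longrightarrow> s (s g) = g"
    using inv unfolding group_involution_def by auto
  have gh: "g \<noteq> h" using g h by auto
  define x where "x = h \<otimes> g"
  have x: "x \<in> carrier G" using h g x_def by auto
  let ?a = "\<lambda>x. if x \<in> {g, h} then (1::'f) else 0"
  have e: "ga_mult G ?a (ga_star G s ?a) x = ga_mult G (ga_star G s ?a) ?a x"
    by (rule normal_at[OF nor]) (use h g in auto)
  have l: "ga_mult G ?a (ga_star G s ?a) x = (\<Sum>y\<in>{g, h}. ?a y * ga_star G s ?a (inv y \<otimes> x))"
    by (rule ga_mult_eq) (use h g x in \<open>auto split: if_splits\<close>)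
  have hx: "inv h \<otimes> x = g" unfolding x_def using h g by (simp add: m_assoc[symmetric])
  have "ga_star G s ?a (inv h \<otimes> x) = 1" using hx g by (simp add: ga_star_def)
  moreover have "ga_star G s ?a (inv g \<otimes> x) = 0 \<or> ga_star G s ?a (inv g \<otimes> x) = 1"
    by (simp add: ga_star_def)
  ultimately have "ga_mult G ?a (ga_star G s ?a) x \<noteq> 0" using l gh two by auto
  hence rn: "ga_mult G (ga_star G s ?a) ?a x \<noteq> 0" using e by simp
  have r: "ga_mult G (ga_star G s ?a) ?a x = (\<Sum>y\<in>{g, s h}. ga_star G s ?a y * ?a (inv y \<otimes> x))"
    by (rule ga_mult_eq) (use h g x sc ss in \<open>auto simp: ga_star_def split: if_splits\<close>)
  have "\<exists>y\<in>{g, s h}. ga_star G s ?a y * ?a (inv y \<otimes> x) \<noteq> 0"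
  proof (rule ccontr)
    assume "\<not> ?thesis"
    hence "(\<Sum>y\<in>{g, s h}. ga_star G s ?a y * ?a (inv y \<otimes> x)) = 0"
      by (intro sum.neutral) blast
    thus False using rn r by simp
  qed
  then obtain y where y1: "y \<in> {g, s h}" and nz: "ga_star G s ?a y * ?a (inv y \<otimes> x) \<noteq> 0"
    by blast
  have "inv y \<otimes> x \<in> {g, h}"
  proof (rule ccontr)
    assume "inv y \<otimes> x \<notin> {g, h}"
    then have "?a (inv y \<otimes> x) = 0" by (simp only: if_False)
    then show False using nz by simp
  qed
  note y = y1 this
  have sh: "h \<otimes> s h = s h \<otimes> h" by (rule sing[OF grp inv nor h(1)])
  show ?thesis
  proof (cases "y = g")
    case True
    then have "x = g \<otimes> g \<or> x = g \<otimes> h" using y g h x inv_solve_left' by auto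
    then show ?thesis using gh g h x_def by auto
  next
    case False
    then have "y = s h" using y by auto
    then have "x = s h \<otimes> g \<or> x = s h \<otimes> h" using y g h x sc inv_solve_left' by auto
    moreover have "x \<noteq> s h \<otimes> g" using x_def g h sc by auto
    moreover have "x \<noteq> s h \<otimes> h"
    proof
      assume "x = s h \<otimes> h"
      hence "h \<otimes> g = h \<otimes> s h" using x_def sh by simp
      hence "g = s h" using g h sc by simp
      hence "s g = h" using ss h by simp
      thus False using g h by simp
    qed
    ultimately show ?thesis by blast
  qed
qed

theorem lemma5:
  fixes G (structure) and s :: "'a \<Rightarrow> 'a"
  assumes "group G"
    and "infinite (UNIV :: 'f::field set)"
    and "(2::'f) \<noteq> 0"
    and "group_involution G s"
    and "ga_normal G s TYPE('f)"
  shows "({g \<in> carrier G. s g = g} \<subseteq> group_center G) \<and>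
         (\<forall>g \<in> carrier G. g \<otimes> s g = s g \<otimes> g \<and> g \<otimes> s g \<in> group_center G)"
proof -
  interpret group G by fact
  have sc: "\<And>g. g \<in> carrier G \<Longrightarrow> s g \<in> carrier G" and ss: "\<And>g. g \<in> carrier G \<Longrightarrow> s (s g) = g"
    and sm: "\<And>g h. g \<in> carrier G \<Longrightarrow> h \<in> carrier G \<Longrightarrow> s (g \<otimes> h) = s h \<otimes> s g"
    using assms(4) unfolding group_involution_def by auto
  have A: "g \<in> group_center G" if g: "g \<in> carrier G" "s g = g" for g
  proof -
    have "g \<otimes> h = h \<otimes> g" if h: "h \<in> carrier G" for h
    proof (cases "s h = h")
      case False
      then show ?thesis using pair[OF assms(1,4,5,3) g h] by simp
    next
      case True
      show ?thesis
      proof (cases "s (g \<otimes> h) = g \<otimes> h")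
        case True
        then show ?thesis using sm g h \<open>s h = h\<close> by auto
      next
        case False
        have "(g \<otimes> h) \<otimes> g = g \<otimes> (g \<otimes> h)" using pair[OF assms(1,4,5,3) g _ False] g h by simp
        then show ?thesis using g h by (simp add: m_assoc)
      qed
    qed
    then show ?thesis using g unfolding group_center_def by auto
  qed
  show ?thesis
  proof (intro conjI ballI subsetI)
    fix g assume "g \<in> {g \<in> carrier G. s g = g}" then show "g \<in> group_center G" using A by auto
  next
    fix g assume g: "g \<in> carrier G"
    show "g \<otimes> s g = s g \<otimes> g" by (rule sing[OF assms(1,4,5) g])
    show "g \<otimes> s g \<in> group_center G" using A g sc ss sm by auto
  qed
qed

end
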